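(* Let $X=\mu^{-1}(0)/G$ be a toric Calabi-Yau manifold obtained as a symplectic quotient of $\mathbb{C}^m$ by a subtorus $G\subset T^m$, with quotient map $\pi:\mu^{-1}(0)\to X$, and let $\epsilon\in\mathbb{C}^\times$. Let $\rho=(\rho_0,|\chi^u-\epsilon|):X\to B=\mathbb{R}^{n-1}\times\mathbb{R}_{\geq 0}$ be the Gross fibration and let $$\tilde\rho:\mathbb{C}^m\to\tilde B=\mathbb{R}^{m-1}\times\mathbb{R}_{\geq0},\quad (X_1,\dots,X_m)\mapsto\big(|X_1|^2-|X_m|^2,\dots,|X_{m-1}|^2-|X_m|^2,\ |X_1X_2\cdots X_m-\epsilon|\big)$$ be the Harvey-Lawson fibration. Then the Gross fibration $\rho$ is the fiberwise quotient of $\tilde\rho|_{\mu^{-1}(0)}$ by $G$: there is an embedding of affine manifolds $\iota:B\hookrightarrow\tilde B$ (induced by the map $\mathfrak{t}^*\to(\mathbb{R}^m)^*$, $\mathbf{x}\mapsto(\ell_1(\mathbf{x}),\dots,\ell_m(\mathbf{x}))$) such that $\tilde\rho|_{\mu^{-1}(0)}=\iota\circ\rho\circ\pi$, so that each fiber of $\rho$ is the quotient by $G$ of the corresponding fiber of $\tilde\rho|_{\mu^{-1}(0)}$.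
   Context: $T^m$ acts diagonally on $\mathbb{C}^m$ (standard symplectic form); $G\subset T^m$ is a subtorus of dimension $r=m-n$ with moment map $\mu$, acting freely on $\mu^{-1}(0)$, and $X=\mu^{-1}(0)/G$ is a toric manifold of complex dimension $n$ with residual torus $T=T^m/G$ and moment map $\phi:X\to\mathfrak{t}^*$, whose image is $\Delta=\{\mathbf{x}:\ell_i(\mathbf{x})\ge0,\ i=1,\dots,m\}$, $\ell_i(\mathbf{x})=2\pi(\langle\mathbf{x},v_i\rangle-\lambda_i)$, with $v_i\in N=\mathbb{Z}^n$ the primitive inward normals (ray generators of the fan) and $\lambda_i\in\mathbb{R}$; one has $\ell_i(\phi([X_1,\dots,X_m]))=2\pi|X_i|^2$ on $\mu^{-1}(0)$. $X$ is Calabi-Yau (trivial canonical bundle) and semi-projective (support of the fan convex), so there is $u\in M=\mathrm{Hom}(N,\mathbb{Z})$ with $\langle u,v_i\rangle=1$ for all $i$; the character $\chi^u$ is a holomorphic function on $X$ vanishing to first order exactly along the toric prime divisors, and it lifts to the monomial $X_1\cdots X_m$ on $\mathbb{C}^m$. $T_0\subset T$ is the subtorus preserving $\chi^u$ (equivalently the holomorphic volume form), and $\rho_0:X\to\mathfrak{t}_0^*\cong\mathbb{R}^{n-1}$ is its moment map, i.e. $\phi$ composed with the projection along the ray spanned by $u$. The Gross fibration is $\rho=(\rho_0,|\chi^u-\epsilon|)$, a special Lagrangian torus fibration. *)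

theory Defs
  imports "HOL-Analysis.Analysis"
begin

text \<open>Data: m rays v 0, ..., v (m-1) in N = Z^n (N_R = real^'n, and t^* = M_R
 identified with real^'n via the dot product), constants lam i.
 C^m is modelled as functions nat => complex supported on {..<m};
 the coordinate X_m of the paper is X (m-1).\<close>

definition is_lattice_vec :: "real^'n \<Rightarrow> bool" where
  "is_lattice_vec w \<longleftrightarrow> (\<forall>j. w $ j \<in> \<int>)"

definition primitive_vec :: "real^'n \<Rightarrow> bool" where
  "primitive_vec w \<longleftrightarrow> is_lattice_vec w \<and> w \<noteq> 0 \<and>
     \<not> (\<exists>k::int. k > 1 \<and> (\<exists>w'. is_lattice_vec w' \<and> w = of_int k *\<^sub>R w'))"

definition Cm :: "nat \<Rightarrow> (nat \<Rightarrow> complex) set" where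
  "Cm m = {X. \<forall>i\<ge>m. X i = 0}"

definition ell :: "(nat \<Rightarrow> real^'n) \<Rightarrow> (nat \<Rightarrow> real) \<Rightarrow> nat \<Rightarrow> real^'n \<Rightarrow> real" where
  "ell v lam i x = 2 * pi * (x \<bullet> v i - lam i)"

definition gLie :: "nat \<Rightarrow> (nat \<Rightarrow> real^'n) \<Rightarrow> (nat \<Rightarrow> real) set" where
  "gLie m v = {\<xi>. (\<forall>i\<ge>m. \<xi> i = 0) \<and> (\<Sum>i<m. \<xi> i *\<^sub>R v i) = 0}"

definition Gsub :: "nat \<Rightarrow> (nat \<Rightarrow> real^'n) \<Rightarrow> (nat \<Rightarrow> complex) set" where
  "Gsub m v = {t. \<exists>\<xi>\<in>gLie m v. t = (\<lambda>i. cis (2 * pi * \<xi> i))}"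

definition tact :: "(nat \<Rightarrow> complex) \<Rightarrow> (nat \<Rightarrow> complex) \<Rightarrow> (nat \<Rightarrow> complex)" where
  "tact t X = (\<lambda>i. t i * X i)"

text \<open>Moment map of G (restriction to g of the shifted T^m moment map),
 as a functional on g.\<close>
definition momG :: "nat \<Rightarrow> (nat \<Rightarrow> real) \<Rightarrow> (nat \<Rightarrow> complex) \<Rightarrow> (nat \<Rightarrow> real) \<Rightarrow> real" where
  "momG m lam X \<xi> = (\<Sum>i<m. \<xi> i * (pi * (cmod (X i))\<^sup>2 + pi * lam i))"

definition level0 :: "nat \<Rightarrow> (nat \<Rightarrow> real^'n) \<Rightarrow> (nat \<Rightarrow> real) \<Rightarrow> (nat \<Rightarrow> complex) set" where
  "level0 m v lam = {X \<in> Cm m. \<forall>\<xi>\<in>gLie m v. momG m lam X \<xi> = 0}"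

text \<open>Quotient map pi : mu^{-1}(0) -> X = mu^{-1}(0)/G (points of X are G-orbits).\<close>
definition quot :: "nat \<Rightarrow> (nat \<Rightarrow> real^'n) \<Rightarrow> (nat \<Rightarrow> complex) \<Rightarrow> (nat \<Rightarrow> complex) set" where
  "quot m v X = (\<lambda>t. tact t X) ` Gsub m v"

definition Xquot :: "nat \<Rightarrow> (nat \<Rightarrow> real^'n) \<Rightarrow> (nat \<Rightarrow> real) \<Rightarrow> (nat \<Rightarrow> complex) set set" where
  "Xquot m v lam = quot m v ` level0 m v lam"

text \<open>Moment map phi of the residual torus, induced from that of T^m.\<close>
definition phi :: "nat \<Rightarrow> (nat \<Rightarrow> real^'n) \<Rightarrow> (nat \<Rightarrow> real) \<Rightarrow> (nat \<Rightarrow> complex) set \<Rightarrow> real^'n" where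
  "phi m v lam Orb = (THE x. \<exists>X\<in>Orb. \<forall>i<m. ell v lam i x = 2 * pi * (cmod (X i))\<^sup>2)"

definition chi_u :: "nat \<Rightarrow> (nat \<Rightarrow> complex) set \<Rightarrow> complex" where
  "chi_u m Orb = (THE z. \<exists>X\<in>Orb. z = (\<Prod>i<m. X i))"

text \<open>Gross fibration rho = (rho_0, |chi^u - eps|), rho_0 = P o phi with
 P : t^* -> t_0^* the projection along the ray spanned by u.\<close>
definition gross :: "nat \<Rightarrow> (nat \<Rightarrow> real^'n) \<Rightarrow> (nat \<Rightarrow> real) \<Rightarrow> (real^'n \<Rightarrow> 'b) \<Rightarrow> complex
    \<Rightarrow> (nat \<Rightarrow> complex) set \<Rightarrow> 'b \<times> real" where
  "gross m v lam P \<epsilon> Orb = (P (phi m v lam Orb), cmod (chi_u m Orb - \<epsilon>))"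

definition harvey_lawson :: "nat \<Rightarrow> complex \<Rightarrow> (nat \<Rightarrow> complex) \<Rightarrow> (nat \<Rightarrow> real) \<times> real" where
  "harvey_lawson m \<epsilon> X =
     ((\<lambda>i. if i < m - 1 then (cmod (X i))\<^sup>2 - (cmod (X (m - 1)))\<^sup>2 else 0),
      cmod ((\<Prod>i<m. X i) - \<epsilon>))"

end

theory Submission
  imports Defs
begin

lemma span_rep:
  fixes v :: "nat \<Rightarrow> real^'n"
  assumes spanning: "span (v ` {..<m}) = UNIV" and inj: "inj_on v {..<m}"
  shows "\<exists>\<xi>. (\<forall>i\<ge>m. \<xi> i = 0) \<and> (\<Sum>i<m. \<xi> i *\<^sub>R v i) = y"
proof -
  have "y \<in> span (v ` {..<m})" using spanning by simp
  then obtain c where c: "(\<Sum>w\<in>v ` {..<m}. c w *\<^sub>R w) = y"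
    using span_finite[of "v ` {..<m}"] by auto
  have "(\<Sum>w\<in>v ` {..<m}. c w *\<^sub>R w) = (\<Sum>i<m. c (v i) *\<^sub>R v i)"
    using sum.reindex[OF inj, of "\<lambda>w. c w *\<^sub>R w"] by simp
  also have "\<dots> = (\<Sum>i<m. (if i < m then c (v i) else 0) *\<^sub>R v i)"
    by (rule sum.cong) auto
  finally show ?thesis using c
    by (intro exI[of _ "\<lambda>i. if i < m then c (v i) else 0"]) auto
qed

lemma rep_unique:
  fixes v :: "nat \<Rightarrow> real^'n"
  assumes a: "\<forall>\<xi>\<in>gLie m v. (\<Sum>i<m. \<xi> i * a i) = 0"
    and "\<forall>i\<ge>m. \<xi> i = 0" "\<forall>i\<ge>m. \<eta> i = 0"
    and "(\<Sum>i<m. \<xi> i *\<^sub>R v i) = (\<Sum>i<m. \<eta> i *\<^sub>R v i)"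
  shows "(\<Sum>i<m. \<xi> i * a i) = (\<Sum>i<m. \<eta> i * a i)"
proof -
  have "(\<lambda>i. \<xi> i - \<eta> i) \<in> gLie m v"
    using assms(2-4) by (simp add: gLie_def scaleR_diff_left sum_subtractf)
  from bspec[OF a this] have "(\<Sum>i<m. (\<xi> i - \<eta> i) * a i) = 0" by simp
  thus ?thesis by (simp add: left_diff_distrib sum_subtractf)
qed

lemma orth_zero:
  fixes v :: "nat \<Rightarrow> real^'n"
  assumes spanning: "span (v ` {..<m}) = UNIV" and "\<forall>i<m. w \<bullet> v i = 0"
  shows "w = 0"
proof -
  have "orthogonal w w"
    by (rule orthogonal_to_span[of w "v ` {..<m}"]) (use assms in \<open>auto simp: orthogonal_def\<close>)
  thus ?thesis by (simp add: orthogonal_def)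
qed

lemma exists_dual:
  fixes v :: "nat \<Rightarrow> real^'n"
  assumes spanning: "span (v ` {..<m}) = UNIV" and inj: "inj_on v {..<m}"
    and a: "\<forall>\<xi>\<in>gLie m v. (\<Sum>i<m. \<xi> i * a i) = 0"
  shows "\<exists>x. \<forall>i<m. x \<bullet> v i = a i"
proof -
  define R where "R y = (SOME \<xi>. (\<forall>i\<ge>m. \<xi> i = 0) \<and> (\<Sum>i<m. \<xi> i *\<^sub>R v i) = y)" for y
  have R: "(\<forall>i\<ge>m. R y i = 0) \<and> (\<Sum>i<m. R y i *\<^sub>R v i) = y" for y
    using someI_ex[OF span_rep[OF spanning inj, of y]] unfolding R_def .
  define g where "g y = (\<Sum>i<m. R y i * a i)" for y
  have g: "g y = (\<Sum>i<m. \<xi> i * a i)" if "\<forall>i\<ge>m. \<xi> i = 0" "(\<Sum>i<m. \<xi> i *\<^sub>R v i) = y" for \<xi> y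
    unfolding g_def by (rule rep_unique[OF a]) (use R that in auto)
  have lin: "linear g"
  proof (rule linearI)
    fix y z
    have "g (y + z) = (\<Sum>i<m. (R y i + R z i) * a i)"
      by (rule g) (use R in \<open>auto simp: scaleR_add_left sum.distrib\<close>)
    thus "g (y + z) = g y + g z" by (simp add: g_def distrib_right sum.distrib)
  next
    fix c :: real and y
    have "g (c *\<^sub>R y) = (\<Sum>i<m. (c * R y i) * a i)"
    proof (rule g)
      show "\<forall>i\<ge>m. c * R y i = 0" using R by simp
      have "(\<Sum>i<m. (c * R y i) *\<^sub>R v i) = c *\<^sub>R (\<Sum>i<m. R y i *\<^sub>R v i)"
        by (simp add: scaleR_sum_right)
      thus "(\<Sum>i<m. (c * R y i) *\<^sub>R v i) = c *\<^sub>R y" using R by simp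
    qed
    thus "g (c *\<^sub>R y) = c *\<^sub>R g y" by (simp add: g_def sum_distrib_left mult.assoc)
  qed
  define x where "x = (\<Sum>b\<in>Basis. g b *\<^sub>R b)"
  have xg: "x \<bullet> y = g y" for y
  proof -
    have "g y = g (\<Sum>b\<in>Basis. (y \<bullet> b) *\<^sub>R b)" by (simp add: euclidean_representation)
    also have "\<dots> = (\<Sum>b\<in>Basis. (y \<bullet> b) * g b)"
      by (simp add: linear_sum[OF lin] linear_cmul[OF lin])
    finally show ?thesis unfolding x_def by (simp add: inner_sum_left inner_sum_right inner_commute mult.commute)
  qed
  have "x \<bullet> v k = a k" if "k < m" for k
  proof -
    have "g (v k) = (\<Sum>i<m. (if i = k then 1 else 0) * a i)"
    proof (rule g)
      have "(\<Sum>i<m. (if i = k then 1 else 0) *\<^sub>R v i) = (\<Sum>i<m. if i = k then v i else 0)"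
        by (rule sum.cong) auto
      thus "(\<Sum>i<m. (if i = k then 1 else 0) *\<^sub>R v i) = v k" using that by simp
    qed (use that in auto)
    also have "\<dots> = (\<Sum>i<m. if i = k then a i else 0)" by (rule sum.cong) auto
    finally show ?thesis using xg that by simp
  qed
  thus ?thesis by blast
qed

lemma pi_cancel: "pi * (2 * a) + pi * (2 * b) = pi * (2 * c) + pi * (2 * d) \<Longrightarrow> a + b = c + (d::real)"
proof -
  assume "pi * (2 * a) + pi * (2 * b) = pi * (2 * c) + pi * (2 * d)"
  hence "(2 * pi) * (a + b) = (2 * pi) * (c + d)" by (simp add: algebra_simps)
  thus ?thesis by simp
qed

lemma pi_cancel2: "a + b = c + (d::real) \<Longrightarrow> pi * (2 * a) + pi * (2 * b) = pi * (2 * c) + pi * (2 * d)"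
proof -
  assume "a + b = c + d"
  hence "(2 * pi) * (a + b) = (2 * pi) * (c + d)" by simp
  thus ?thesis by (simp add: algebra_simps)
qed

lemma prod_cis: "finite A \<Longrightarrow> (\<Prod>i\<in>A. cis (f i)) = cis (\<Sum>i\<in>A. f i)"
  by (induct rule: finite_induct) (auto simp: cis_mult)

lemma orbit_cmod:
  assumes "Y \<in> quot m v X" shows "cmod (Y i) = cmod (X i)"
  using assms by (auto simp: quot_def Gsub_def tact_def norm_mult)

lemma orbit_self: "X \<in> quot m v X"
proof -
  have "(\<lambda>i. 0) \<in> gLie m v" by (simp add: gLie_def)
  hence "(\<lambda>i. cis (2 * pi * 0)) \<in> Gsub m v" unfolding Gsub_def by force
  moreover have "X = tact (\<lambda>i. cis (2 * pi * 0)) X" by (simp add: tact_def)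
  ultimately show ?thesis unfolding quot_def by blast
qed

lemma orbit_prod:
  fixes v :: "nat \<Rightarrow> real^'n"
  assumes CY: "\<forall>i<m. u \<bullet> v i = 1" and "Y \<in> quot m v X"
  shows "(\<Prod>i<m. Y i) = (\<Prod>i<m. X i)"
proof -
  obtain \<xi> where xi: "\<xi> \<in> gLie m v" and Y: "Y = tact (\<lambda>i. cis (2 * pi * \<xi> i)) X"
    using assms(2) by (auto simp: quot_def Gsub_def)
  have "(\<Sum>i<m. \<xi> i) = (\<Sum>i<m. \<xi> i * (u \<bullet> v i))" using CY by simp
  also have "\<dots> = u \<bullet> (\<Sum>i<m. \<xi> i *\<^sub>R v i)" by (simp add: inner_sum_right)
  also have "\<dots> = 0" using xi by (simp add: gLie_def)
  finally have s0: "(\<Sum>i<m. \<xi> i) = 0" .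
  have "(\<Prod>i<m. Y i) = (\<Prod>i<m. cis (2 * pi * \<xi> i)) * (\<Prod>i<m. X i)"
    by (simp add: Y tact_def prod.distrib)
  also have "(\<Prod>i<m. cis (2 * pi * \<xi> i)) = cis (\<Sum>i<m. 2 * pi * \<xi> i)" by (simp add: prod_cis)
  also have "\<dots> = 1" using s0 by (simp add: sum_distrib_left[symmetric])
  finally show ?thesis by simp
qed

lemma phi_level0:
  fixes v :: "nat \<Rightarrow> real^'n"
  assumes spanning: "span (v ` {..<m}) = UNIV" and inj: "inj_on v {..<m}"
    and X: "X \<in> level0 m v lam"
  shows "\<forall>i<m. ell v lam i (phi m v lam (quot m v X)) = 2 * pi * (cmod (X i))\<^sup>2"
proof -
  let ?a = "\<lambda>i. (cmod (X i))\<^sup>2 + lam i"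
  have "\<forall>\<xi>\<in>gLie m v. (\<Sum>i<m. \<xi> i * ?a i) = 0"
  proof
    fix \<xi> assume "\<xi> \<in> gLie m v"
    with X have "momG m lam X \<xi> = 0" by (simp add: level0_def)
    hence "pi * (\<Sum>i<m. \<xi> i * ?a i) = 0"
      by (simp add: momG_def sum_distrib_left algebra_simps)
    thus "(\<Sum>i<m. \<xi> i * ?a i) = 0" by simp
  qed
  then obtain x where x: "\<forall>i<m. x \<bullet> v i = ?a i" using exists_dual[OF spanning inj, where a = ?a] by blast
  have pi2: "2 * pi \<noteq> (0::real)" by simp
  have ellx: "ell v lam i y = 2 * pi * (cmod (X i))\<^sup>2 \<longleftrightarrow> y \<bullet> v i = ?a i" for i y
    unfolding ell_def mult_left_cancel[OF pi2] by auto
  have "phi m v lam (quot m v X) = x"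
    unfolding phi_def
  proof (rule the_equality)
    show "\<exists>Y\<in>quot m v X. \<forall>i<m. ell v lam i x = 2 * pi * (cmod (Y i))\<^sup>2"
      using orbit_self x ellx by blast
  next
    fix y assume "\<exists>Y\<in>quot m v X. \<forall>i<m. ell v lam i y = 2 * pi * (cmod (Y i))\<^sup>2"
    then obtain Y where Y: "Y \<in> quot m v X" and "\<forall>i<m. ell v lam i y = 2 * pi * (cmod (Y i))\<^sup>2" by blast
    hence "\<forall>i<m. y \<bullet> v i = ?a i" by (simp add: orbit_cmod[OF Y] ellx)
    hence "\<forall>i<m. (y - x) \<bullet> v i = 0" using x by (simp add: inner_diff_left)
    thus "y = x" using orth_zero[OF spanning, of "y - x"] by simp
  qed
  thus ?thesis using x ellx by simp
qed

lemma chi_level0: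
  fixes v :: "nat \<Rightarrow> real^'n"
  assumes CY: "\<forall>i<m. u \<bullet> v i = 1"
  shows "chi_u m (quot m v X) = (\<Prod>i<m. X i)"
  unfolding chi_u_def
  by (rule the_equality) (use orbit_self orbit_prod[OF CY] in auto)

theorem mainTheorem1:
  fixes m :: nat and v :: "nat \<Rightarrow> real^'n" and lam :: "nat \<Rightarrow> real"
    and u :: "real^'n" and \<epsilon> :: complex and P :: "real^'n \<Rightarrow> 'b::euclidean_space"
  assumes rays: "\<forall>i<m. primitive_vec (v i)"
    and distinct_rays: "inj_on v {..<m}"
    and spanning: "span (v ` {..<m}) = UNIV"
    and u_lattice: "is_lattice_vec u"
    and CY: "\<forall>i<m. u \<bullet> v i = 1"
    and free: "\<forall>X\<in>level0 m v lam. \<forall>t\<in>Gsub m v. tact t X = X \<longrightarrow> t = (\<lambda>i. 1)"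
    and eps: "\<epsilon> \<noteq> 0"
    and P_lin: "linear P" and P_surj: "surj P"
    and P_ker: "\<forall>x. P x = 0 \<longleftrightarrow> x \<in> span {u}"
  shows "\<exists>\<iota> :: 'b \<times> real \<Rightarrow> (nat \<Rightarrow> real) \<times> real.
     (\<forall>x r. \<iota> (P x, r) =
        ((\<lambda>i. if i < m - 1 then (ell v lam i x - ell v lam (m - 1) x) / (2 * pi) else 0), r))
     \<and> inj \<iota>
     \<and> (\<forall>X\<in>level0 m v lam. harvey_lawson m \<epsilon> X = \<iota> (gross m v lam P \<epsilon> (quot m v X)))
     \<and> (\<forall>b \<in> UNIV \<times> {0..}.
          quot m v ` {X \<in> level0 m v lam. harvey_lawson m \<epsilon> X = \<iota> b}
          = {Orb \<in> Xquot m v lam. gross m v lam P \<epsilon> Orb = b})"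
proof -
  define h where "h x = (\<lambda>i. if i < m - 1 then (ell v lam i x - ell v lam (m - 1) x) / (2 * pi) else (0::real))" for x
  define \<iota> where "\<iota> = (\<lambda>(p, r::real). (h (SOME x. P x = p), r))"
  have hdiff: "h x = h y \<longleftrightarrow> (\<forall>i<m. (x - y) \<bullet> v i = (x - y) \<bullet> v (m - 1))" for x y
  proof
    assume "h x = h y"
    show "\<forall>i<m. (x - y) \<bullet> v i = (x - y) \<bullet> v (m - 1)"
    proof (intro allI impI)
      fix i assume i: "i < m"
      show "(x - y) \<bullet> v i = (x - y) \<bullet> v (m - 1)"
      proof (cases "i < m - 1")
        case True
        from fun_cong[OF \<open>h x = h y\<close>, of i] True
        show ?thesis by (simp add: h_def ell_def inner_diff_left algebra_simps) (rule pi_cancel)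
      next
        case False with i have "i = m - 1" by simp
        thus ?thesis by simp
      qed
    qed
  next
    assume H: "\<forall>i<m. (x - y) \<bullet> v i = (x - y) \<bullet> v (m - 1)"
    show "h x = h y"
    proof
      fix i show "h x i = h y i"
      proof (cases "i < m - 1")
        case True hence "i < m" by simp
        hence "(x - y) \<bullet> v i = (x - y) \<bullet> v (m - 1)" using H by blast
        thus ?thesis using True by (simp add: h_def ell_def inner_diff_left algebra_simps) (rule pi_cancel2)
      qed (simp add: h_def)
    qed
  qed
  have Peq: "P x = P y \<longleftrightarrow> h x = h y" for x y
  proof -
    have "P x = P y \<longleftrightarrow> x - y \<in> span {u}"
    proof -
      have "P x = P y \<longleftrightarrow> P x - P y = 0" by (rule eq_iff_diff_eq_0)
      also have "P x - P y = P (x - y)" by (simp add: linear_diff[OF P_lin])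
      finally show ?thesis using P_ker by simp
    qed
    also have "\<dots> \<longleftrightarrow> (\<forall>i<m. (x - y) \<bullet> v i = (x - y) \<bullet> v (m - 1))"
    proof
      assume "x - y \<in> span {u}"
      then obtain c where "x - y = c *\<^sub>R u" by (auto simp: span_singleton)
      thus "\<forall>i<m. (x - y) \<bullet> v i = (x - y) \<bullet> v (m - 1)" using CY by (auto)
    next
      assume H: "\<forall>i<m. (x - y) \<bullet> v i = (x - y) \<bullet> v (m - 1)"
      define c where "c = (x - y) \<bullet> v (m - 1)"
      have "\<forall>i<m. (x - y - c *\<^sub>R u) \<bullet> v i = 0"
      proof (intro allI impI)
        fix i assume i: "i < m"
        have "(x - y) \<bullet> v i = c" using H i unfolding c_def by blast
        moreover have "u \<bullet> v i = 1" using CY i by blast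
        ultimately show "(x - y - c *\<^sub>R u) \<bullet> v i = 0" by (simp only: inner_diff_left inner_scaleR_left mult_1_right diff_self)
      qed
      hence "x - y - c *\<^sub>R u = 0" by (rule orth_zero[OF spanning])
      hence "x - y = c *\<^sub>R u" by simp
      thus "x - y \<in> span {u}" by (simp add: span_singleton) blast
    qed
    finally show ?thesis using hdiff by simp
  qed
  have iota: "\<iota> (P x, r) = (h x, r)" for x r
  proof -
    have "P (SOME y. P y = P x) = P x" by (rule someI) (rule refl)
    thus ?thesis unfolding \<iota>_def using Peq by simp
  qed
  have injI: "inj \<iota>"
  proof (rule injI)
    fix b c assume eq: "\<iota> b = \<iota> c"
    obtain p r where b: "b = (p, r)" by fastforce
    obtain q s where c: "c = (q, s)" by fastforce
    obtain x where x: "p = P x" using P_surj by (metis surjD)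
    obtain y where y: "q = P y" using P_surj by (metis surjD)
    from eq have "h x = h y" "r = s" by (auto simp: b c x y iota)
    thus "b = c" using Peq b c x y by simp
  qed
  have HL: "harvey_lawson m \<epsilon> X = \<iota> (gross m v lam P \<epsilon> (quot m v X))" if X: "X \<in> level0 m v lam" for X
  proof -
    have ph: "\<forall>i<m. ell v lam i (phi m v lam (quot m v X)) = 2 * pi * (cmod (X i))\<^sup>2"
      by (rule phi_level0[OF spanning distinct_rays X])
    have "(\<lambda>i. if i < m - 1 then (cmod (X i))\<^sup>2 - (cmod (X (m - 1)))\<^sup>2 else 0) = h (phi m v lam (quot m v X))"
      by (rule ext) (use ph in \<open>auto simp: h_def right_diff_distrib[symmetric]\<close>)
    thus ?thesis unfolding gross_def iota chi_level0[OF CY] harvey_lawson_def by simp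
  qed
  show ?thesis
  proof (intro exI[of _ \<iota>] conjI allI ballI)
    fix x r
    show "\<iota> (P x, r) = ((\<lambda>i. if i < m - 1 then (ell v lam i x - ell v lam (m - 1) x) / (2 * pi) else 0), r)"
      using iota[of x r] unfolding h_def .
  next
    show "inj \<iota>" by (rule injI)
  next
    show "harvey_lawson m \<epsilon> X = \<iota> (gross m v lam P \<epsilon> (quot m v X))" if "X \<in> level0 m v lam" for X
      using HL that .
  next
    fix b :: "'b \<times> real"
    show "quot m v ` {X \<in> level0 m v lam. harvey_lawson m \<epsilon> X = \<iota> b}
          = {Orb \<in> Xquot m v lam. gross m v lam P \<epsilon> Orb = b}"
    proof
      show "quot m v ` {X \<in> level0 m v lam. harvey_lawson m \<epsilon> X = \<iota> b}
          \<subseteq> {Orb \<in> Xquot m v lam. gross m v lam P \<epsilon> Orb = b}"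
      proof
        fix Orb assume "Orb \<in> quot m v ` {X \<in> level0 m v lam. harvey_lawson m \<epsilon> X = \<iota> b}"
        then obtain X where X: "X \<in> level0 m v lam" "harvey_lawson m \<epsilon> X = \<iota> b" and O: "Orb = quot m v X"
          by blast
        have "\<iota> (gross m v lam P \<epsilon> (quot m v X)) = \<iota> b" using HL[OF X(1)] X(2) by simp
        hence "gross m v lam P \<epsilon> Orb = b" using injD[OF injI] O by blast
        thus "Orb \<in> {Orb \<in> Xquot m v lam. gross m v lam P \<epsilon> Orb = b}"
          using X(1) O by (auto simp: Xquot_def)
      qed
    next
      show "{Orb \<in> Xquot m v lam. gross m v lam P \<epsilon> Orb = b}
          \<subseteq> quot m v ` {X \<in> level0 m v lam. harvey_lawson m \<epsilon> X = \<iota> b}"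
      proof
        fix Orb assume "Orb \<in> {Orb \<in> Xquot m v lam. gross m v lam P \<epsilon> Orb = b}"
        then obtain X where X: "X \<in> level0 m v lam" and O: "Orb = quot m v X"
          and g: "gross m v lam P \<epsilon> Orb = b" by (auto simp: Xquot_def)
        have "harvey_lawson m \<epsilon> X = \<iota> b" using HL[OF X] g O by simp
        thus "Orb \<in> quot m v ` {X \<in> level0 m v lam. harvey_lawson m \<epsilon> X = \<iota> b}"
          using X O by blast
      qed
    qed
  qed
qed

end
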